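(* Fix $r\in[1,2)$ and assume the hypotheses of the context. Then for all $X,P\in E$, $$\tilde{\mathcal H}(X,P)=\inf_{Q\in\mathcal E}\big\{\langle\langle F(X,Q),P\rangle\rangle+L(X,Q)\big\}.$$
   Context: $H,\Lambda$ real separable Hilbert spaces ($H$: inner product $\langle\cdot,\cdot\rangle$, norm $|\cdot|$; $\Lambda$: norm $|\cdot|_\Lambda$), $\tilde\Lambda\subset\Lambda$ convex. $B\in L(H)$ self-adjoint strictly positive, $|x|_{-1}^2=\langle Bx,x\rangle$. $\mathcal P_r(H),\mathcal M_r,d_r$ and the $|\cdot|_{-1}$-analogues $\mathcal M_{-1,r},d_{-1,r}$. Hypotheses ($C,C_1\ge0$, $C_2,C_3>0$; all $x,y\in H,\mu,\beta\in\mathcal P_2(H),q\in\tilde\Lambda$): $f=f_1+f_2$, $f_1:H\times\mathcal P_2(H)\to H$, $f_2:H\times\mathcal P_2(H)\times\Lambda\to H$, $\langle f(x,\mu,q)-f(y,\beta,q),B(x-y)\rangle\le C(|x-y|_{-1}^2+d_{-1,r}^2(\mu,\beta))$, $|f_1(x,\mu)-f_1(y,\beta)|+|f_2(x,\mu,q)-f_2(y,\beta,q)|\le C(|x-y|+d_r(\mu,\beta))$, $|f(x,\mu,q)|_{-1}\le C(1+|x|_{-1}+\mathcal M_{-1,r}^{1/r}(\mu)+|q|_\Lambda)$, $|f_2(x,\mu,q)|\le C(1+|q|_\Lambda)$; $l=l_1+l_2$ continuous, $|l_1(x,\mu)-l_1(y,\beta)|+|l_2(x,\mu,q)-l_2(y,\beta,q)|\le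 C(|x-y|_{-1}+d_{-1,r}(\mu,\beta))$, $-C_1+C_2|q|_\Lambda^2\le l_2(x,\mu,q)\le C_1+C_3|q|_\Lambda^2$. Lifts: $\Omega=(0,1)$ with Lebesgue measure $\mathcal L^1$, $E=L^2(\Omega;H)$ with inner product $\langle\langle X,Y\rangle\rangle=\int_\Omega\langle X(\omega),Y(\omega)\rangle d\omega$, $\mathcal E=L^2(\Omega;\tilde\Lambda)$; $X_\#\mathcal L^1$ = law of $X$; $F(X,Q)(\omega)=f(X(\omega),X_\#\mathcal L^1,Q(\omega))$, $L(X,Q)=\int_\Omega l(X(\omega),X_\#\mathcal L^1,Q(\omega))d\omega$; $\mathcal H(x,\mu,p)=\inf_{q\in\tilde\Lambda}(\langle f(x,\mu,q),p\rangle+l(x,\mu,q))$ and $\tilde{\mathcal H}(X,P)=\int_\Omega\mathcal H(X(\omega),X_\#\mathcal L^1,P(\omega))d\omega$. *)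

theory Defs
  imports "HOL-Analysis.Analysis" "HOL-Probability.Probability"
begin

definition normB :: "('a::real_inner \<Rightarrow> 'a) \<Rightarrow> 'a \<Rightarrow> real" where
  "normB B x = sqrt (B x \<bullet> x)"

definition P2 :: "'a::{real_normed_vector, second_countable_topology} measure set" where
  "P2 = {\<mu>. prob_space \<mu> \<and> sets \<mu> = sets borel \<and>
              (\<integral>\<^sup>+ x. ennreal ((norm x)\<^sup>2) \<partial>\<mu>) < \<infinity>}"

text \<open>Moment of order r with respect to a gauge c (c = norm gives M_r, c = normB B gives M_{-1,r}).\<close>
definition moment :: "('a \<Rightarrow> real) \<Rightarrow> real \<Rightarrow> 'a measure \<Rightarrow> real" where
  "moment c r \<mu> = enn2real (\<integral>\<^sup>+ x. ennreal (c x powr r) \<partial>\<mu>)"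

definition couplings :: "'a::{real_normed_vector, second_countable_topology} measure \<Rightarrow> 'a measure \<Rightarrow> ('a \<times> 'a) measure set" where
  "couplings \<mu> \<nu> = {\<pi>. prob_space \<pi> \<and> sets \<pi> = sets (borel \<Otimes>\<^sub>M borel) \<and>
                        distr \<pi> borel fst = \<mu> \<and> distr \<pi> borel snd = \<nu>}"

text \<open>Wasserstein distance of order r for the cost given by the gauge c of the difference
  (c = norm gives d_r, c = normB B gives d_{-1,r}).\<close>
definition wass :: "('a::{real_normed_vector, second_countable_topology} \<Rightarrow> real) \<Rightarrow> real \<Rightarrow> 'a measure \<Rightarrow> 'a measure \<Rightarrow> real" where
  "wass c r \<mu> \<nu> =
     enn2real (INF \<pi>\<in>couplings \<mu> \<nu>. \<integral>\<^sup>+ z. ennreal (c (fst z - snd z) powr r) \<partial>\<pi>) powr (1 / r)"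

definition Om :: "real measure" where
  "Om = restrict_space lborel {0<..<1}"

definition law :: "(real \<Rightarrow> 'a::topological_space) \<Rightarrow> 'a measure" where
  "law X = distr Om borel X"

definition L2on :: "'a::{real_normed_vector, second_countable_topology} set \<Rightarrow> (real \<Rightarrow> 'a) set" where
  "L2on S = {X. X \<in> borel_measurable Om \<and> integrable Om (\<lambda>\<omega>. (norm (X \<omega>))\<^sup>2) \<and>
                (\<forall>\<omega>\<in>space Om. X \<omega> \<in> S)}"

definition innerE :: "(real \<Rightarrow> 'a::{real_inner, complete_space, second_countable_topology}) \<Rightarrow> (real \<Rightarrow> 'a) \<Rightarrow> real" where
  "innerE X Y = (\<integral>\<omega>. X \<omega> \<bullet> Y \<omega> \<partial>Om)"

definition liftF :: "('h \<Rightarrow> 'h measure \<Rightarrow> 'l \<Rightarrow> 'h) \<Rightarrow> (real \<Rightarrow> 'h::topological_space) \<Rightarrow> (real \<Rightarrow> 'l) \<Rightarrow> real \<Rightarrow> 'h" where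
  "liftF f X Q = (\<lambda>\<omega>. f (X \<omega>) (law X) (Q \<omega>))"

definition liftL :: "('h \<Rightarrow> 'h measure \<Rightarrow> 'l \<Rightarrow> real) \<Rightarrow> (real \<Rightarrow> 'h::topological_space) \<Rightarrow> (real \<Rightarrow> 'l) \<Rightarrow> real" where
  "liftL l X Q = (\<integral>\<omega>. l (X \<omega>) (law X) (Q \<omega>) \<partial>Om)"

definition Ham :: "('h \<Rightarrow> 'h measure \<Rightarrow> 'l \<Rightarrow> 'h::real_inner) \<Rightarrow> ('h \<Rightarrow> 'h measure \<Rightarrow> 'l \<Rightarrow> real) \<Rightarrow> 'l set
                    \<Rightarrow> 'h \<Rightarrow> 'h measure \<Rightarrow> 'h \<Rightarrow> real" where
  "Ham f l Lam x \<mu> p = (INF q\<in>Lam. f x \<mu> q \<bullet> p + l x \<mu> q)"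

definition HamLift :: "('h \<Rightarrow> 'h measure \<Rightarrow> 'l \<Rightarrow> 'h::{real_inner, topological_space}) \<Rightarrow> ('h \<Rightarrow> 'h measure \<Rightarrow> 'l \<Rightarrow> real) \<Rightarrow> 'l set
                    \<Rightarrow> (real \<Rightarrow> 'h) \<Rightarrow> (real \<Rightarrow> 'h) \<Rightarrow> real" where
  "HamLift f l Lam X P = (\<integral>\<omega>. Ham f l Lam (X \<omega>) (law X) (P \<omega>) \<partial>Om)"

end

theory Submission
  imports Defs
begin

lemma countable_subcover_idx:
  fixes U :: "'i \<Rightarrow> 'a::second_countable_topology set"
  assumes "\<And>i. i \<in> I \<Longrightarrow> open (U i)"
  shows "\<exists>J\<subseteq>I. countable J \<and> (\<Union>i\<in>J. U i) = (\<Union>i\<in>I. U i)"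
proof -
  have op: "\<And>S. S \<in> U ` I \<Longrightarrow> open S" using assms by blast
  obtain F where F: "F \<subseteq> U ` I" "countable F" "\<Union>F = \<Union>(U ` I)"
    using Lindelof[OF op] by metis
  define pick where "pick S = (SOME i. i \<in> I \<and> U i = S)" for S
  have sel: "pick S \<in> I \<and> U (pick S) = S" if "S \<in> F" for S
    unfolding pick_def by (rule someI_ex) (use F(1) that in blast)
  define J where "J = pick ` F"
  have "J \<subseteq> I" unfolding J_def using sel by blast
  moreover have "countable J" using F(2) unfolding J_def by (rule countable_image)
  moreover have "(\<Union>i\<in>J. U i) = \<Union>F"
  proof
    show "(\<Union>i\<in>J. U i) \<subseteq> \<Union>F" 
    proof
      fix x assume "x \<in> (\<Union>i\<in>J. U i)"
      then obtain S where S: "S \<in> F" "x \<in> U (pick S)" unfolding J_def by blast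
      then show "x \<in> \<Union>F" using sel[OF S(1)] by auto
    qed
    show "\<Union>F \<subseteq> (\<Union>i\<in>J. U i)"
    proof
      fix x assume "x \<in> \<Union>F"
      then obtain S where S: "S \<in> F" "x \<in> S" by blast
      have "pick S \<in> J" unfolding J_def using S(1) by blast
      moreover have "x \<in> U (pick S)" using sel[OF S(1)] S(2) by simp
      ultimately show "x \<in> (\<Union>i\<in>J. U i)" by blast
    qed
  qed
  ultimately have "J \<subseteq> I \<and> countable J \<and> (\<Union>i\<in>J. U i) = (\<Union>i\<in>I. U i)" using F(3) by simp
  then show ?thesis by (intro exI[of _ J])
qed

lemma countable_inf_dense:
  fixes G :: "'a::second_countable_topology \<Rightarrow> 'q \<Rightarrow> real"
  assumes cont: "\<And>q. q \<in> Lam \<Longrightarrow> continuous_on UNIV (\<lambda>z. G z q)"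
    and bdd: "\<And>z. bdd_below ((\<lambda>q. G z q) ` Lam)" and ne: "Lam \<noteq> {}"
  shows "\<exists>S \<subseteq> Lam. countable S \<and> S \<noteq> {} \<and> (\<forall>z e. e > 0 \<longrightarrow> (\<exists>q\<in>S. G z q < (INF q\<in>Lam. G z q) + e))"
proof -
  have "\<forall>t. \<exists>J\<subseteq>Lam. countable J \<and> (\<Union>q\<in>J. {z. G z q < t}) = (\<Union>q\<in>Lam. {z. G z q < t})"
  proof
    fix t :: real
    show "\<exists>J\<subseteq>Lam. countable J \<and> (\<Union>q\<in>J. {z. G z q < t}) = (\<Union>q\<in>Lam. {z. G z q < t})"
      by (rule countable_subcover_idx) (intro open_Collect_less cont continuous_on_const)
  qed
  then obtain J where J0: "\<forall>t. J t \<subseteq> Lam \<and> countable (J t) \<and> (\<Union>q\<in>J t. {z. G z q < t}) = (\<Union>q\<in>Lam. {z. G z q < t})"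
    by (rule choice[THEN exE])
  have J: "\<And>t. J t \<subseteq> Lam" "\<And>t. countable (J t)"
     "\<And>t. (\<Union>q\<in>J t. {z. G z q < t}) = (\<Union>q\<in>Lam. {z. G z q < t})"
    using J0 by simp_all
  obtain q0 where q0: "q0 \<in> Lam" using ne by blast
  define S where "S = insert q0 (\<Union>t\<in>\<rat>. J t)"
  have "S \<subseteq> Lam" using J q0 S_def by auto
  moreover have "countable S" unfolding S_def using J(2) countable_rat by auto
  moreover have "\<forall>z e. e > 0 \<longrightarrow> (\<exists>q\<in>S. G z q < (INF q\<in>Lam. G z q) + e)"
  proof (intro allI impI)
    fix z and e :: real assume e: "e > 0"
    obtain t where t: "t \<in> \<rat>" "(INF q\<in>Lam. G z q) < t" "t < (INF q\<in>Lam. G z q) + e"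
      using Rats_dense_in_real[of "(INF q\<in>Lam. G z q)" "(INF q\<in>Lam. G z q) + e"] e by auto
    then obtain q where "q \<in> Lam" "G z q < t" using cINF_less_iff[OF ne bdd] by blast
    then have "z \<in> (\<Union>q\<in>J t. {z. G z q < t})" using J(3)[of t] by blast
    then obtain q' where "q' \<in> J t" "G z q' < t" by blast
    then show "\<exists>q\<in>S. G z q < (INF q\<in>Lam. G z q) + e" using t S_def by force
  qed
  ultimately show ?thesis unfolding S_def by blast
qed

lemma carath_meas:
  fixes phi :: "'a::{metric_space,second_countable_topology} \<Rightarrow> 'b \<Rightarrow> 'c::metric_space"
  assumes X: "X \<in> borel_measurable M" and Q: "Q \<in> measurable M N"
   and meas: "\<And>x. phi x \<in> measurable N borel"
   and cont: "\<And>w xs. w \<in> space M \<Longrightarrow> xs \<longlonglongrightarrow> X w \<Longrightarrow> (\<lambda>n. phi (xs n) (Q w)) \<longlonglongrightarrow> phi (X w) (Q w)"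
  shows "(\<lambda>w. phi (X w) (Q w)) \<in> borel_measurable M"
proof -
  obtain F where F: "\<And>i. simple_function M (F i)" "\<And>w. w \<in> space M \<Longrightarrow> (\<lambda>i. F i w) \<longlonglongrightarrow> X w"
    using borel_measurable_implies_sequence_metric[OF X, of undefined] by blast
  have m: "(\<lambda>w. phi (F i w) (Q w)) \<in> borel_measurable M" for i
  proof (rule measurable_compose_countable'[where I="F i ` space M"])
    show "\<And>y. y \<in> F i ` space M \<Longrightarrow> (\<lambda>w. phi y (Q w)) \<in> borel_measurable M"
      using measurable_comp[OF Q meas] by (simp add: comp_def)
    show "countable (F i ` space M)" using F(1)[of i] by (simp add: simple_function_def countable_finite)
    show "F i \<in> measurable M (count_space (F i ` space M))"
      by (rule measurable_count_space_eq_countable[THEN iffD2])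
         (use F(1)[of i] in \<open>auto simp: simple_function_def countable_finite\<close>)
  qed
  show ?thesis
    by (rule borel_measurable_LIMSEQ_metric[of "\<lambda>i w. phi (F i w) (Q w)", OF m]) (use F(2) cont in auto)
qed

lemma space_Om: "space Om = {0<..<1}"
  unfolding Om_def by (simp add: space_restrict_space)



lemma prob_Om: "prob_space Om"
proof
  show "emeasure Om (space Om) = 1"
    unfolding space_Om unfolding Om_def
    by (simp add: emeasure_restrict_space)
qed



lemma wass_self:
  fixes c :: "'a::{real_normed_vector, second_countable_topology} \<Rightarrow> real"
  assumes "prob_space \<mu>" "sets \<mu> = sets borel" "c 0 = 0" and cm[measurable]: "c \<in> borel_measurable borel"
  shows "wass c r \<mu> \<mu> = 0"
proof -
  define \<pi> where "\<pi> = distr \<mu> (borel \<Otimes>\<^sub>M borel) (\<lambda>x. (x, x))"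
  have m: "(\<lambda>x. (x, x)) \<in> measurable \<mu> (borel \<Otimes>\<^sub>M borel)"
    by (intro measurable_Pair measurable_ident_sets) (simp_all add: assms(2))
  have "\<pi> \<in> couplings \<mu> \<mu>"
    unfolding couplings_def
  proof (intro CollectI conjI)
    show "prob_space \<pi>" unfolding \<pi>_def by (rule prob_space.prob_space_distr[OF assms(1) m])
    show "sets \<pi> = sets (borel \<Otimes>\<^sub>M borel)" unfolding \<pi>_def by simp
    have "distr \<pi> borel fst = distr \<mu> borel (\<lambda>x. x)"
      unfolding \<pi>_def by (subst distr_distr[OF measurable_fst m]) (simp add: comp_def)
    also have "\<dots> = \<mu>" by (rule distr_id2) (use assms(2) in simp)
    finally show "distr \<pi> borel fst = \<mu>" .
    have "distr \<pi> borel snd = distr \<mu> borel (\<lambda>x. x)"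
      unfolding \<pi>_def by (subst distr_distr[OF measurable_snd m]) (simp add: comp_def)
    also have "\<dots> = \<mu>" by (rule distr_id2) (use assms(2) in simp)
    finally show "distr \<pi> borel snd = \<mu>" .
  qed
  moreover have "(\<integral>\<^sup>+ z. ennreal (c (fst z - snd z) powr r) \<partial>\<pi>) = 0"
  proof -
    have mi: "(\<lambda>z. ennreal (c (fst z - snd z) powr r)) \<in> borel_measurable (borel \<Otimes>\<^sub>M borel)" by measurable
    have "(\<integral>\<^sup>+ z. ennreal (c (fst z - snd z) powr r) \<partial>\<pi>) = (\<integral>\<^sup>+ x. ennreal (c (x - x) powr r) \<partial>\<mu>)"
      unfolding \<pi>_def using nn_integral_distr[OF m, of "\<lambda>z. ennreal (c (fst z - snd z) powr r)"] mi by simp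
    also have "\<dots> = 0" using assms(3) by simp
    finally show ?thesis .
  qed
  ultimately have "(INF \<pi>\<in>couplings \<mu> \<mu>. \<integral>\<^sup>+ z. ennreal (c (fst z - snd z) powr r) \<partial>\<pi>) \<le> 0"
    by (intro INF_lower2[of \<pi>]) simp_all
  then have "(INF \<pi>\<in>couplings \<mu> \<mu>. \<integral>\<^sup>+ z. ennreal (c (fst z - snd z) powr r) \<partial>\<pi>) = 0"
    by simp
  then show ?thesis unfolding wass_def by simp
qed


lemma lip_tendsto:
  assumes "\<And>y. dist (g y) (g x) \<le> K * dist y x" "xs \<longlonglongrightarrow> x"
  shows "(\<lambda>n. g (xs n)) \<longlonglongrightarrow> g x"
proof -
  have d: "(\<lambda>n. dist (xs n) x) \<longlonglongrightarrow> 0" using assms(2) by (simp only: tendsto_dist_iff[symmetric])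
  have "(\<lambda>n. K * dist (xs n) x) \<longlonglongrightarrow> 0" using tendsto_mult_right_zero[OF d] .
  then have "(\<lambda>n. dist (g (xs n)) (g x)) \<longlonglongrightarrow> 0"
    by (rule tendsto_sandwich[rotated 2, OF tendsto_const]) (simp_all add: assms(1))
  then show ?thesis by (simp only: tendsto_dist_iff[symmetric])
qed


lemma normB_bound:
  assumes "bounded_linear B"
  shows "\<exists>k\<ge>0. \<forall>x. normB B x \<le> k * norm x"
proof -
  obtain K where K: "K > 0" "\<And>x. norm (B x) \<le> norm x * K"
    using bounded_linear.pos_bounded[OF assms] by blast
  have "normB B x \<le> sqrt K * norm x" for x
  proof -
    have "B x \<bullet> x \<le> norm (B x) * norm x" by (rule norm_cauchy_schwarz)
    also have "\<dots> \<le> K * (norm x)\<^sup>2" using K(2)[of x] mult_right_mono[of "norm (B x)" "norm x * K" "norm x"] by (simp add: power2_eq_square mult_ac)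
    finally have "sqrt (B x \<bullet> x) \<le> sqrt (K * (norm x)\<^sup>2)" by (rule real_sqrt_le_mono)
    then show ?thesis unfolding normB_def using K(1) by (simp add: real_sqrt_mult)
  qed
  then show ?thesis using K(1) by (intro exI[of _ "sqrt K"]) auto
qed



lemma law_P2:
  assumes "X \<in> L2on UNIV"
  shows "law X \<in> P2"
proof -
  have X: "X \<in> borel_measurable Om" "integrable Om (\<lambda>w. (norm (X w))\<^sup>2)" using assms unfolding L2on_def by auto
  interpret Om: prob_space Om by (rule prob_Om)
  have "prob_space (law X)" unfolding law_def by (rule Om.prob_space_distr[OF X(1)])
  moreover have "sets (law X) = sets borel" unfolding law_def by simp
  moreover have "(\<integral>\<^sup>+ x. ennreal ((norm x)\<^sup>2) \<partial>law X) < \<infinity>"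
  proof -
    have "(\<integral>\<^sup>+ x. ennreal ((norm x)\<^sup>2) \<partial>law X) = (\<integral>\<^sup>+ w. ennreal ((norm (X w))\<^sup>2) \<partial>Om)"
      unfolding law_def by (subst nn_integral_distr) (use X(1) in auto)
    also have "\<dots> < \<infinity>" using X(2) by (simp add: integrable_iff_bounded)
    finally show ?thesis .
  qed
  ultimately show ?thesis unfolding P2_def by blast
qed

lemma two_mul_le: fixes u v :: real shows "2 * u * v \<le> u\<^sup>2 + v\<^sup>2"
proof -
  have "0 \<le> (u - v)\<^sup>2" by simp
  then show ?thesis by (simp add: power2_diff)
qed

lemma le_one_sq: fixes u :: real assumes "0 \<le> u" shows "u \<le> 1 + u\<^sup>2"
  using two_mul_le[of u 1] assms by simp

lemma amgm_C: fixes C C2 u v :: real assumes "C2 > 0"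
  shows "C * u * v \<le> C2/2 * u\<^sup>2 + C\<^sup>2/(2 * C2) * v\<^sup>2"
proof -
  have "2 * (C2 * u) * (C * v) \<le> (C2 * u)\<^sup>2 + (C * v)\<^sup>2" by (rule two_mul_le)
  then have "C2 * (2 * (C * u * v)) \<le> C2 * (C2 * u\<^sup>2 + C\<^sup>2/C2 * v\<^sup>2)" using assms
    by (simp add: power2_eq_square algebra_simps)
  then have "2 * (C * u * v) \<le> C2 * u\<^sup>2 + C\<^sup>2/C2 * v\<^sup>2" using assms
    by (simp only: mult_le_cancel_left_pos)
  then show ?thesis by (simp add: field_simps)
qed


lemma ar_fp: fixes a C nx np nq F :: real
  assumes "0\<le>a" "0\<le>C" "0\<le>nx" "0\<le>np" "0\<le>nq" "F \<le> a + C * nx + C * (1+nq)"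
  shows "F * np \<le> (a+3 * C) * (1+nx\<^sup>2+np\<^sup>2+nq\<^sup>2)"
proof -
  define W where "W = 1+nx\<^sup>2+np\<^sup>2+nq\<^sup>2"
  have p0: "F * np \<le> (a + C * nx + C * (1+nq)) * np" by (rule mult_right_mono) (use assms in auto)
  have p1: "(a + C * nx + C * (1+nq)) * np = a * np + C * (nx * np) + C * np + C * (nq * np)" by (simp add: algebra_simps)
  have e1: "np \<le> W" using le_one_sq[of np] assms zero_le_power2[of nx] zero_le_power2[of nq] unfolding W_def by linarith
  have e2': "2 * (nx * np) \<le> nx\<^sup>2+np\<^sup>2" using two_mul_le[of nx np] by (simp add: mult.assoc)
  have e2: "nx * np \<le> W" using e2' assms mult_nonneg_nonneg[of nx np] zero_le_power2[of nq] unfolding W_def by linarith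
  have e3': "2 * (nq * np) \<le> nq\<^sup>2+np\<^sup>2" using two_mul_le[of nq np] by (simp add: mult.assoc)
  have e3: "nq * np \<le> W" using e3' assms mult_nonneg_nonneg[of nq np] zero_le_power2[of nx] unfolding W_def by linarith
  have "a * np \<le> a * W" using e1 assms by (intro mult_left_mono) auto
  moreover have "C * (nx * np) \<le> C * W" using e2 assms by (intro mult_left_mono) auto
  moreover have "C * np \<le> C * W" using e1 assms by (intro mult_left_mono) auto
  moreover have "C * (nq * np) \<le> C * W" using e3 assms by (intro mult_left_mono) auto
  moreover have "(a+3 * C) * W = a * W + 3 * (C * W)" by (simp add: algebra_simps)
  ultimately have "F * np \<le> (a+3 * C) * W" using p0 p1 by linarith
  then show ?thesis unfolding W_def .
qed

lemma ar_l: fixes b Ck C1 C3 nx nq L1 L2 :: real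
  assumes "0\<le>Ck" "0\<le>nx" "\<bar>L1\<bar> \<le> b + Ck * nx" "\<bar>L2\<bar> \<le> C1 + C3 * nq\<^sup>2" "0 \<le> C3" "0 \<le> C1" "0 \<le> b"
  shows "\<bar>L1 + L2\<bar> \<le> (b + Ck + C1 + C3) * (1+nx\<^sup>2+np\<^sup>2+nq\<^sup>2)"
proof -
  define W where "W = 1+nx\<^sup>2+np\<^sup>2+nq\<^sup>2"
  have w1: "1 \<le> W" "nx \<le> W" "nq\<^sup>2 \<le> W" using le_one_sq[of nx] assms zero_le_power2[of nx] zero_le_power2[of np] zero_le_power2[of nq] unfolding W_def by linarith+
  have "b \<le> b * W" using w1(1) assms mult_left_mono[of 1 W b] by simp
  moreover have "Ck * nx \<le> Ck * W" using w1 assms by (intro mult_left_mono) auto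
  moreover have "C1 \<le> C1 * W" using w1(1) assms mult_left_mono[of 1 W C1] by simp
  moreover have "C3 * nq\<^sup>2 \<le> C3 * W" using w1 assms by (intro mult_left_mono) auto
  moreover have "(b + Ck + C1 + C3) * W = b * W + Ck * W + C1 * W + C3 * W" by (simp add: algebra_simps)
  moreover have "\<bar>L1 + L2\<bar> \<le> \<bar>L1\<bar> + \<bar>L2\<bar>" by (rule abs_triangle_ineq)
  ultimately have "\<bar>L1 + L2\<bar> \<le> (b + Ck + C1 + C3) * W" using assms(3,4) by linarith
  then show ?thesis unfolding W_def .
qed

lemma ar_low: fixes a b C Ck C1 C2 nx np nq F L1 L2 ip :: real
  assumes "0\<le>a" "0\<le>C" "0\<le>nx" "0\<le>np" "0\<le>nq" "0 \<le> Ck" "0 \<le> b" "0 \<le> C1" "C2 > 0"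
    "F \<le> a + C * nx + C * (1+nq)" "-(F * np) \<le> ip"
    "\<bar>L1\<bar> \<le> b + Ck * nx" "-C1 + C2 * nq\<^sup>2 \<le> L2"
  shows "C2/2 * nq\<^sup>2 - (a + 2 * C + C\<^sup>2/(2 * C2) + b + Ck + C1) * (1+nx\<^sup>2+np\<^sup>2) \<le> ip + L1 + L2"
proof -
  define V where "V = 1+nx\<^sup>2+np\<^sup>2"
  define D where "D = C\<^sup>2/(2 * C2)"
  have D0: "0 \<le> D" unfolding D_def using assms by auto
  have p0: "F * np \<le> (a + C * nx + C * (1+nq)) * np" by (rule mult_right_mono) (use assms in auto)
  have p1: "(a + C * nx + C * (1+nq)) * np = a * np + C * (nx * np) + C * np + C * nq * np" by (simp add: algebra_simps)
  have e1: "np \<le> V" using le_one_sq[of np] assms zero_le_power2[of nx] unfolding V_def by linarith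
  have e2': "2 * (nx * np) \<le> nx\<^sup>2+np\<^sup>2" using two_mul_le[of nx np] by (simp add: mult.assoc)
  have e2: "nx * np \<le> V" using e2' assms mult_nonneg_nonneg[of nx np] unfolding V_def by linarith
  have e4: "1 \<le> V" "nx \<le> V" "np\<^sup>2 \<le> V" using le_one_sq[of nx] assms zero_le_power2[of nx] zero_le_power2[of np] unfolding V_def by linarith+
  have am: "C * nq * np \<le> C2/2 * nq\<^sup>2 + D * np\<^sup>2" unfolding D_def by (rule amgm_C) fact
  have "a * np \<le> a * V" using e1 assms by (intro mult_left_mono) auto
  moreover have "C * (nx * np) \<le> C * V" using e2 assms by (intro mult_left_mono) auto
  moreover have "C * np \<le> C * V" using e1 assms by (intro mult_left_mono) auto
  moreover have "D * np\<^sup>2 \<le> D * V" using e4 D0 by (intro mult_left_mono) auto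
  moreover have "Ck * nx \<le> Ck * V" using e4 assms by (intro mult_left_mono) auto
  moreover have "b \<le> b * V" using e4(1) assms mult_left_mono[of 1 V b] by simp
  moreover have "C1 \<le> C1 * V" using e4(1) assms mult_left_mono[of 1 V C1] by simp
  moreover have "(a + 2 * C + D + b + Ck + C1) * V = a * V + 2 * (C * V) + D * V + b * V + Ck * V + C1 * V"
    by (simp add: algebra_simps)
  moreover have "- (b + Ck * nx) \<le> L1" using assms(12) by (simp add: abs_le_iff)
  ultimately have "C2/2 * nq\<^sup>2 - (a + 2 * C + D + b + Ck + C1) * V \<le> ip + L1 + L2"
    using p0 p1 am assms(11,13) by linarith
  then show ?thesis unfolding V_def D_def .
qed

theorem proposition4p11:
  fixes B :: "'h::{real_inner, complete_space, second_countable_topology} \<Rightarrow> 'h"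
    and Lam :: "'l::{real_inner, complete_space, second_countable_topology} set"
    and f1 :: "'h \<Rightarrow> 'h measure \<Rightarrow> 'h"
    and f2 :: "'h \<Rightarrow> 'h measure \<Rightarrow> 'l \<Rightarrow> 'h"
    and l1 :: "'h \<Rightarrow> 'h measure \<Rightarrow> real"
    and l2 :: "'h \<Rightarrow> 'h measure \<Rightarrow> 'l \<Rightarrow> real"
    and C C1 C2 C3 r :: real
    and X P :: "real \<Rightarrow> 'h"
  defines "f \<equiv> (\<lambda>x \<mu> q. f1 x \<mu> + f2 x \<mu> q)"
    and "l \<equiv> (\<lambda>x \<mu> q. l1 x \<mu> + l2 x \<mu> q)"
  assumes r: "1 \<le> r" "r < 2"
    and Lam_convex: "convex Lam"
    and B_lin: "bounded_linear B"
    and B_sa: "\<And>x y. B x \<bullet> y = x \<bullet> B y"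
    and B_pos: "\<And>x. x \<noteq> 0 \<Longrightarrow> B x \<bullet> x > 0"
    and constants: "C \<ge> 0" "C1 \<ge> 0" "C2 > 0" "C3 > 0"
    and f_mono: "\<And>x y \<mu> \<beta> q. \<mu> \<in> P2 \<Longrightarrow> \<beta> \<in> P2 \<Longrightarrow> q \<in> Lam \<Longrightarrow>
        (f x \<mu> q - f y \<beta> q) \<bullet> B (x - y)
          \<le> C * ((normB B (x - y))\<^sup>2 + (wass (normB B) r \<mu> \<beta>)\<^sup>2)"
    and f_lip: "\<And>x y \<mu> \<beta> q. \<mu> \<in> P2 \<Longrightarrow> \<beta> \<in> P2 \<Longrightarrow> q \<in> Lam \<Longrightarrow>
        norm (f1 x \<mu> - f1 y \<beta>) + norm (f2 x \<mu> q - f2 y \<beta> q)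
          \<le> C * (norm (x - y) + wass norm r \<mu> \<beta>)"
    and f_growth: "\<And>x \<mu> q. \<mu> \<in> P2 \<Longrightarrow> q \<in> Lam \<Longrightarrow>
        normB B (f x \<mu> q) \<le> C * (1 + normB B x + moment (normB B) r \<mu> powr (1 / r) + norm q)"
    and f2_bound: "\<And>x \<mu> q. \<mu> \<in> P2 \<Longrightarrow> q \<in> Lam \<Longrightarrow> norm (f2 x \<mu> q) \<le> C * (1 + norm q)"
    and f2_meas: "\<And>x \<mu>. \<mu> \<in> P2 \<Longrightarrow> (\<lambda>q. f2 x \<mu> q) \<in> borel_measurable (restrict_space borel Lam)"
    and l_cont: "\<And>xs x \<mu>s \<mu> qs q. (\<And>n. \<mu>s n \<in> P2) \<Longrightarrow> \<mu> \<in> P2 \<Longrightarrow> (\<And>n. qs n \<in> Lam) \<Longrightarrow> q \<in> Lam \<Longrightarrow>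
        xs \<longlonglongrightarrow> x \<Longrightarrow> (\<lambda>n. wass norm 2 (\<mu>s n) \<mu>) \<longlonglongrightarrow> 0 \<Longrightarrow> qs \<longlonglongrightarrow> q \<Longrightarrow>
        (\<lambda>n. l (xs n) (\<mu>s n) (qs n)) \<longlonglongrightarrow> l x \<mu> q"
    and l_lip: "\<And>x y \<mu> \<beta> q. \<mu> \<in> P2 \<Longrightarrow> \<beta> \<in> P2 \<Longrightarrow> q \<in> Lam \<Longrightarrow>
        \<bar>l1 x \<mu> - l1 y \<beta>\<bar> + \<bar>l2 x \<mu> q - l2 y \<beta> q\<bar>
          \<le> C * (normB B (x - y) + wass (normB B) r \<mu> \<beta>)"
    and l2_bounds: "\<And>x \<mu> q. \<mu> \<in> P2 \<Longrightarrow> q \<in> Lam \<Longrightarrow>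
        - C1 + C2 * (norm q)\<^sup>2 \<le> l2 x \<mu> q \<and> l2 x \<mu> q \<le> C1 + C3 * (norm q)\<^sup>2"
    and X: "X \<in> L2on UNIV"
    and P: "P \<in> L2on UNIV"
  shows "HamLift f l Lam X P = (INF Q\<in>L2on Lam. innerE (liftF f X Q) P + liftL l X Q)"
proof -
  define \<mu> where "\<mu> = law X"
  have \<mu>P2: "\<mu> \<in> P2" unfolding \<mu>_def by (rule law_P2[OF X])
  have \<mu>ps: "prob_space \<mu>" "sets \<mu> = sets borel" using \<mu>P2 unfolding P2_def by auto
  have Bcont: "continuous_on UNIV B" using linear_continuous_on[OF B_lin] .
  have nBm: "normB B \<in> borel_measurable borel"
  proof -
    have "continuous_on UNIV (\<lambda>x. sqrt (B x \<bullet> x))" by (intro continuous_intros Bcont)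
    then show ?thesis unfolding normB_def[abs_def] by (rule borel_measurable_continuous_onI)
  qed
  have nm: "(norm :: 'h \<Rightarrow> real) \<in> borel_measurable borel"
    by (rule borel_measurable_continuous_onI) (intro continuous_intros)
  have wn: "wass norm r \<mu> \<mu> = 0" by (rule wass_self[OF \<mu>ps]) (simp_all add: nm)
  have wB: "wass (normB B) r \<mu> \<mu> = 0" by (rule wass_self[OF \<mu>ps]) (simp_all add: normB_def nBm)
  have w2: "wass norm 2 \<mu> \<mu> = 0" by (rule wass_self[OF \<mu>ps]) (simp_all add: nm)
  interpret Om: prob_space Om by (rule prob_Om)
  have Xm: "X \<in> borel_measurable Om" "integrable Om (\<lambda>w. (norm (X w))\<^sup>2)" using X unfolding L2on_def by auto
  have Pm: "P \<in> borel_measurable Om" "integrable Om (\<lambda>w. (norm (P w))\<^sup>2)" using P unfolding L2on_def by auto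
  have half: "1/2 \<in> space Om" unfolding space_Om by simp
  show ?thesis
  proof (cases "Lam = {}")
    case True
    have "L2on Lam = {}" using True half unfolding L2on_def by blast
    then show ?thesis using True by (simp add: HamLift_def Ham_def Om.prob_space)
  next
    case False
    then obtain q0 where q0: "q0 \<in> Lam" by blast
    obtain k where k: "k \<ge> 0" "\<And>x. normB B x \<le> k * norm x" using normB_bound[OF B_lin] by blast
    define a where "a = norm (f1 0 \<mu>)"
    define b where "b = \<bar>l1 0 \<mu>\<bar>"
    have a0: "a \<ge> 0" and b0: "b \<ge> 0" unfolding a_def b_def by auto
    have f1b: "norm (f1 x \<mu>) \<le> a + C * norm x" for x
    proof -
      have "norm (f1 x \<mu> - f1 0 \<mu>) + norm (f2 x \<mu> q0 - f2 0 \<mu> q0) \<le> C * (norm (x - 0) + wass norm r \<mu> \<mu>)"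
        by (rule f_lip[OF \<mu>P2 \<mu>P2 q0])
      then have "norm (f1 x \<mu> - f1 0 \<mu>) + norm (f2 x \<mu> q0 - f2 0 \<mu> q0) \<le> C * norm x"
        using wn by simp
      then have "norm (f1 x \<mu> - f1 0 \<mu>) \<le> C * norm x"
        using norm_ge_zero[of "f2 x \<mu> q0 - f2 0 \<mu> q0"] by linarith
      then show ?thesis unfolding a_def using norm_triangle_ineq2[of "f1 x \<mu>" "f1 0 \<mu>"] by linarith
    qed
    have fb: "norm (f x \<mu> q) \<le> a + C * norm x + C * (1 + norm q)" if "q \<in> Lam" for x q
    proof -
      have "norm (f x \<mu> q) \<le> norm (f1 x \<mu>) + norm (f2 x \<mu> q)" unfolding f_def by (rule norm_triangle_ineq)
      then show ?thesis using f1b[of x] f2_bound[OF \<mu>P2 that, of x] by linarith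
    qed
    have flip: "dist (f y \<mu> q) (f x \<mu> q) \<le> C * dist y x" if "q \<in> Lam" for x y q
    proof -
      have c: "norm (f1 y \<mu> - f1 x \<mu>) + norm (f2 y \<mu> q - f2 x \<mu> q) \<le> C * (norm (y - x) + wass norm r \<mu> \<mu>)"
        by (rule f_lip[OF \<mu>P2 \<mu>P2 that])
      have e: "f y \<mu> q - f x \<mu> q = (f1 y \<mu> - f1 x \<mu>) + (f2 y \<mu> q - f2 x \<mu> q)" unfolding f_def by simp
      have "norm (f y \<mu> q - f x \<mu> q) \<le> norm (f1 y \<mu> - f1 x \<mu>) + norm (f2 y \<mu> q - f2 x \<mu> q)"
        unfolding e by (rule norm_triangle_ineq)
      then show ?thesis using c wn by (simp add: dist_norm)
    qed
    have l1b: "\<bar>l1 x \<mu>\<bar> \<le> b + (C * k) * norm x" for x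
    proof -
      have "\<bar>l1 x \<mu> - l1 0 \<mu>\<bar> + \<bar>l2 x \<mu> q0 - l2 0 \<mu> q0\<bar> \<le> C * (normB B (x - 0) + wass (normB B) r \<mu> \<mu>)"
        by (rule l_lip[OF \<mu>P2 \<mu>P2 q0])
      then have "\<bar>l1 x \<mu> - l1 0 \<mu>\<bar> \<le> C * normB B x" using wB abs_ge_zero[of "l2 x \<mu> q0 - l2 0 \<mu> q0"] by simp
      also have "\<dots> \<le> C * (k * norm x)" using k(2)[of x] constants by (intro mult_left_mono) auto
      finally show ?thesis unfolding b_def by (simp add: mult.assoc)
    qed
    have l2lo: "-C1 + C2 * (norm q)\<^sup>2 \<le> l2 x \<mu> q" if "q \<in> Lam" for x q
      using l2_bounds[OF \<mu>P2 that, of x] by simp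
    have l2abs: "\<bar>l2 x \<mu> q\<bar> \<le> C1 + C3 * (norm q)\<^sup>2" if "q \<in> Lam" for x q
    proof -
      have "0 \<le> C2 * (norm q)\<^sup>2" "0 \<le> C3 * (norm q)\<^sup>2" using constants by auto
      then show ?thesis using l2_bounds[OF \<mu>P2 that, of x] by (simp add: abs_le_iff)
    qed
    define G where "G z q = f (fst z) \<mu> q \<bullet> snd z + l (fst z) \<mu> q" for z q
    define K0 where "K0 = a + 3 * C + b + C * k + C1 + C3 + C\<^sup>2/(2 * C2) + 1"
    have Ck0: "0 \<le> C * k" using constants k by auto
    have D0: "0 \<le> C\<^sup>2/(2 * C2)" using constants by auto
    have K0ge: "a + 3 * C \<le> K0" "b + C * k + C1 + C3 \<le> K0" "a + 2 * C + C\<^sup>2/(2 * C2) + b + C * k + C1 \<le> K0" "0 \<le> K0"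
      unfolding K0_def using a0 b0 Ck0 D0 constants by linarith+
    have Bf: "\<bar>f x \<mu> q \<bullet> p\<bar> \<le> K0 * (1 + (norm x)\<^sup>2 + (norm p)\<^sup>2 + (norm q)\<^sup>2)" if "q \<in> Lam" for x p q
    proof -
      have "\<bar>f x \<mu> q \<bullet> p\<bar> \<le> norm (f x \<mu> q) * norm p" by (rule Cauchy_Schwarz_ineq2)
      also have "\<dots> \<le> (a + 3 * C) * (1 + (norm x)\<^sup>2 + (norm p)\<^sup>2 + (norm q)\<^sup>2)"
        by (rule ar_fp) (use fb[OF that] constants a0 in auto)
      also have "\<dots> \<le> K0 * (1 + (norm x)\<^sup>2 + (norm p)\<^sup>2 + (norm q)\<^sup>2)"
        by (rule mult_right_mono) (use K0ge in auto)
      finally show ?thesis .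
    qed
    have Bl: "\<bar>l x \<mu> q\<bar> \<le> K0 * (1 + (norm x)\<^sup>2 + (norm p)\<^sup>2 + (norm q)\<^sup>2)" if "q \<in> Lam" for x p q
    proof -
      have "\<bar>l1 x \<mu> + l2 x \<mu> q\<bar> \<le> (b + C * k + C1 + C3) * (1 + (norm x)\<^sup>2 + (norm p)\<^sup>2 + (norm q)\<^sup>2)"
        by (rule ar_l) (use l1b l2abs[OF that] constants Ck0 b0 in auto)
      also have "\<dots> \<le> K0 * (1 + (norm x)\<^sup>2 + (norm p)\<^sup>2 + (norm q)\<^sup>2)"
        by (rule mult_right_mono) (use K0ge in auto)
      finally show ?thesis unfolding l_def by simp
    qed
    have Blow: "C2/2 * (norm q)\<^sup>2 - K0 * (1 + (norm (fst z))\<^sup>2 + (norm (snd z))\<^sup>2) \<le> G z q" if "q \<in> Lam" for z q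
    proof -
      have "-(norm (f (fst z) \<mu> q) * norm (snd z)) \<le> f (fst z) \<mu> q \<bullet> snd z"
        using Cauchy_Schwarz_ineq2[of "f (fst z) \<mu> q" "snd z"] by (simp add: abs_le_iff)
      then have "C2/2 * (norm q)\<^sup>2 - (a + 2 * C + C\<^sup>2/(2 * C2) + b + C * k + C1) * (1 + (norm (fst z))\<^sup>2 + (norm (snd z))\<^sup>2)
          \<le> f (fst z) \<mu> q \<bullet> snd z + l1 (fst z) \<mu> + l2 (fst z) \<mu> q"
        by (intro ar_low[where F="norm (f (fst z) \<mu> q)"]) (use fb[OF that] l1b l2lo[OF that] constants a0 b0 Ck0 in auto)
      moreover have "(a + 2 * C + C\<^sup>2/(2 * C2) + b + C * k + C1) * (1 + (norm (fst z))\<^sup>2 + (norm (snd z))\<^sup>2)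
          \<le> K0 * (1 + (norm (fst z))\<^sup>2 + (norm (snd z))\<^sup>2)"
        by (rule mult_right_mono) (use K0ge in auto)
      ultimately show ?thesis unfolding G_def l_def by (simp add: add.assoc)
    qed
    have Gabs: "\<bar>G z q\<bar> \<le> 2 * K0 * (1 + (norm (fst z))\<^sup>2 + (norm (snd z))\<^sup>2 + (norm q)\<^sup>2)" if "q \<in> Lam" for z q
    proof -
      have "\<bar>G z q\<bar> \<le> \<bar>f (fst z) \<mu> q \<bullet> snd z\<bar> + \<bar>l (fst z) \<mu> q\<bar>" unfolding G_def by (rule abs_triangle_ineq)
      then show ?thesis using Bf[OF that, of "fst z" "snd z"] Bl[OF that, of "fst z" "snd z"] by linarith
    qed
    have bdd: "bdd_below ((\<lambda>q. G z q) ` Lam)" for z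
    proof (rule bdd_belowI2)
      fix q assume q: "q \<in> Lam"
      have "0 \<le> C2/2 * (norm q)\<^sup>2" using constants by auto
      then show "- (K0 * (1 + (norm (fst z))\<^sup>2 + (norm (snd z))\<^sup>2)) \<le> G z q" using Blow[OF q, of z] by linarith
    qed
    define h where "h z = (INF q\<in>Lam. G z q)" for z
    have hlow: "- (K0 * (1 + (norm (fst z))\<^sup>2 + (norm (snd z))\<^sup>2)) \<le> h z" for z
      unfolding h_def
    proof (rule cINF_greatest[OF False])
      fix q assume q: "q \<in> Lam"
      have "0 \<le> C2/2 * (norm q)\<^sup>2" using constants by auto
      then show "- (K0 * (1 + (norm (fst z))\<^sup>2 + (norm (snd z))\<^sup>2)) \<le> G z q" using Blow[OF q, of z] by linarith
    qed
    have hle: "h z \<le> G z q" if "q \<in> Lam" for z q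
      unfolding h_def by (rule cINF_lower[OF bdd that])
    have habs: "\<bar>h z\<bar> \<le> 2 * K0 * (1 + (norm (fst z))\<^sup>2 + (norm (snd z))\<^sup>2 + (norm q0)\<^sup>2)" for z
    proof -
      have "0 \<le> K0 * (1 + (norm (fst z))\<^sup>2 + (norm (snd z))\<^sup>2)" using K0ge by auto
      moreover have "0 \<le> K0 * (norm q0)\<^sup>2" using K0ge by auto
      moreover have "2 * K0 * (1 + (norm (fst z))\<^sup>2 + (norm (snd z))\<^sup>2 + (norm q0)\<^sup>2)
         = 2 * (K0 * (1 + (norm (fst z))\<^sup>2 + (norm (snd z))\<^sup>2)) + 2 * (K0 * (norm q0)\<^sup>2)" by (simp add: algebra_simps)
      ultimately show ?thesis using hlow[of z] hle[OF q0, of z] Gabs[OF q0, of z] by (simp add: abs_le_iff)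
    qed
    have fcontx: "(\<lambda>n. f (xs n) \<mu> q) \<longlonglongrightarrow> f x \<mu> q" if "q \<in> Lam" "xs \<longlonglongrightarrow> x" for xs x q
      by (rule lip_tendsto[where g="\<lambda>y. f y \<mu> q", OF flip[OF that(1)] that(2)])
    have lcontx: "(\<lambda>n. l (xs n) \<mu> q) \<longlonglongrightarrow> l x \<mu> q" if "q \<in> Lam" "xs \<longlonglongrightarrow> x" for xs x q
      using l_cont[of "\<lambda>n. \<mu>" \<mu> "\<lambda>n. q" q xs x] \<mu>P2 that w2 by simp
    have Gcont: "continuous_on UNIV (\<lambda>z. G z q)" if q: "q \<in> Lam" for q
    proof (rule continuous_on_sequentiallyI)
      fix u :: "nat \<Rightarrow> 'h \<times> 'h" and z assume u: "u \<longlonglongrightarrow> z"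
      have "(\<lambda>n. fst (u n)) \<longlonglongrightarrow> fst z" "(\<lambda>n. snd (u n)) \<longlonglongrightarrow> snd z"
        using tendsto_fst[OF u] tendsto_snd[OF u] by auto
      then show "(\<lambda>n. G (u n) q) \<longlonglongrightarrow> G z q"
        unfolding G_def by (intro tendsto_add tendsto_inner fcontx[OF q] lcontx[OF q])
    qed
    have Gzm: "(\<lambda>z. G z q) \<in> borel_measurable borel" if "q \<in> Lam" for q
      by (rule borel_measurable_continuous_onI[OF Gcont[OF that]])
    obtain S where S: "S \<subseteq> Lam" "countable S" "S \<noteq> {}" "\<And>z e. e > 0 \<Longrightarrow> \<exists>q\<in>S. G z q < h z + e"
      using countable_inf_dense[of Lam G, OF Gcont bdd False] unfolding h_def by blast
    define s where "s = from_nat_into S"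
    have sS: "s n \<in> Lam" for n using from_nat_into[OF S(3)] S(1) s_def by auto
    have sr: "\<exists>n. s n = q" if "q \<in> S" for q using from_nat_into_surj[OF S(2) that] s_def by simp
    have hs: "h z = (INF n. G z (s n))" for z
    proof (rule antisym)
      show "h z \<le> (INF n. G z (s n))" by (rule cINF_greatest) (auto intro: hle sS)
      show "(INF n. G z (s n)) \<le> h z"
      proof (rule field_le_epsilon)
        fix e :: real assume "e > 0"
        then obtain q where q: "q \<in> S" "G z q < h z + e" using S(4) by blast
        then obtain n where n: "s n = q" using sr by blast
        have bddn: "bdd_below (range (\<lambda>n. G z (s n)))"
          by (rule bdd_belowI2[where m="h z"]) (rule hle[OF sS])
        have "(INF n. G z (s n)) \<le> G z (s n)" by (rule cINF_lower[OF bddn]) simp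
        then have "(INF n. G z (s n)) \<le> G z q" using n by simp
        then show "(INF n. G z (s n)) \<le> h z + e" using q(2) by linarith
      qed
    qed
    have hm: "h \<in> borel_measurable borel"
    proof -
      have "(\<lambda>z. INF n. G z (s n)) \<in> borel_measurable borel"
        by (rule borel_measurable_cINF_real) (auto intro: Gzm sS)
      moreover have "h = (\<lambda>z. INF n. G z (s n))" using hs by auto
      ultimately show ?thesis by simp
    qed
    have XPm: "(\<lambda>w. (X w, P w)) \<in> borel_measurable Om"
      by (subst borel_prod[symmetric]) (intro measurable_Pair Xm(1) Pm(1))
    define H where "H w = h (X w, P w)" for w
    have Hm: "H \<in> borel_measurable Om" unfolding H_def using measurable_comp[OF XPm hm] by (simp add: comp_def)
    have intV: "integrable Om (\<lambda>w. c * (1 + (norm (X w))\<^sup>2 + (norm (P w))\<^sup>2 + d))" for c d :: real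
      using Xm(2) Pm(2) by (intro integrable_mult_right integrable_add) auto
    have Hint: "integrable Om H"
    proof (rule Bochner_Integration.integrable_bound[OF intV[of "2 * K0" "(norm q0)\<^sup>2"] Hm])
      show "AE w in Om. norm (H w) \<le> norm (2 * K0 * (1 + (norm (X w))\<^sup>2 + (norm (P w))\<^sup>2 + (norm q0)\<^sup>2))"
        using habs unfolding H_def by (intro AE_I2) (smt (verit) fst_conv snd_conv real_norm_def)
    qed
    have HL: "HamLift f l Lam X P = (\<integral>w. H w \<partial>Om)"
      unfolding HamLift_def H_def h_def G_def Ham_def \<mu>_def by simp
    have fqm: "(\<lambda>q. f x \<mu> q) \<in> borel_measurable (restrict_space borel Lam)" for x
      unfolding f_def by (intro borel_measurable_add measurable_const f2_meas[OF \<mu>P2]) simp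
    have lqm: "(\<lambda>q. l x \<mu> q) \<in> borel_measurable (restrict_space borel Lam)" for x
    proof (rule borel_measurable_continuous_on_restrict)
      show "continuous_on Lam (l x \<mu>)"
      proof (rule continuous_on_sequentiallyI)
        fix u :: "nat \<Rightarrow> 'l" and q assume "\<forall>n. u n \<in> Lam" "q \<in> Lam" "u \<longlonglongrightarrow> q"
        then show "(\<lambda>n. l x \<mu> (u n)) \<longlonglongrightarrow> l x \<mu> q"
          using l_cont[of "\<lambda>n. \<mu>" \<mu> u q "\<lambda>n. x" x] \<mu>P2 w2 by simp
      qed
    qed
    define T where "T Q = innerE (liftF f X Q) P + liftL l X Q" for Q
    have TQ: "T Q = (\<integral>w. G (X w, P w) (Q w) \<partial>Om) \<and> integrable Om (\<lambda>w. G (X w, P w) (Q w))"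
      if Q: "Q \<in> L2on Lam" for Q
    proof -
      have Qm: "Q \<in> borel_measurable Om" "integrable Om (\<lambda>w. (norm (Q w))\<^sup>2)" "\<And>w. w \<in> space Om \<Longrightarrow> Q w \<in> Lam"
        using Q unfolding L2on_def by auto
      have QmL: "Q \<in> measurable Om (restrict_space borel Lam)"
        by (rule measurable_restrict_space2) (use Qm in auto)
      have fm: "(\<lambda>w. f (X w) \<mu> (Q w)) \<in> borel_measurable Om"
        by (rule carath_meas[OF Xm(1) QmL, where phi="\<lambda>x q. f x \<mu> q"]) (auto intro: fqm fcontx Qm(3))
      have lm: "(\<lambda>w. l (X w) \<mu> (Q w)) \<in> borel_measurable Om"
        by (rule carath_meas[OF Xm(1) QmL, where phi="\<lambda>x q. l x \<mu> q"]) (auto intro: lqm lcontx Qm(3))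
      have intW: "integrable Om (\<lambda>w. K0 * (1 + (norm (X w))\<^sup>2 + (norm (P w))\<^sup>2 + (norm (Q w))\<^sup>2))"
        using Xm(2) Pm(2) Qm(2) by (intro integrable_mult_right integrable_add) auto
      have i1: "integrable Om (\<lambda>w. f (X w) \<mu> (Q w) \<bullet> P w)"
      proof (rule Bochner_Integration.integrable_bound[OF intW])
        show "(\<lambda>w. f (X w) \<mu> (Q w) \<bullet> P w) \<in> borel_measurable Om" using fm Pm(1) by measurable
        show "AE w in Om. norm (f (X w) \<mu> (Q w) \<bullet> P w) \<le> norm (K0 * (1 + (norm (X w))\<^sup>2 + (norm (P w))\<^sup>2 + (norm (Q w))\<^sup>2))"
          using Bf Qm(3) by (intro AE_I2) (smt (verit) real_norm_def)
      qed
      have i2: "integrable Om (\<lambda>w. l (X w) \<mu> (Q w))"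
      proof (rule Bochner_Integration.integrable_bound[OF intW lm])
        show "AE w in Om. norm (l (X w) \<mu> (Q w)) \<le> norm (K0 * (1 + (norm (X w))\<^sup>2 + (norm (P w))\<^sup>2 + (norm (Q w))\<^sup>2))"
        proof (rule AE_I2)
          fix w assume w: "w \<in> space Om"
          have "\<bar>l (X w) \<mu> (Q w)\<bar> \<le> K0 * (1 + (norm (X w))\<^sup>2 + (norm (P w))\<^sup>2 + (norm (Q w))\<^sup>2)"
            by (rule Bl[OF Qm(3)[OF w]])
          moreover have "0 \<le> K0 * (1 + (norm (X w))\<^sup>2 + (norm (P w))\<^sup>2 + (norm (Q w))\<^sup>2)" using K0ge by auto
          ultimately show "norm (l (X w) \<mu> (Q w)) \<le> norm (K0 * (1 + (norm (X w))\<^sup>2 + (norm (P w))\<^sup>2 + (norm (Q w))\<^sup>2))" by simp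
        qed
      qed
      have "T Q = (\<integral>w. f (X w) \<mu> (Q w) \<bullet> P w \<partial>Om) + (\<integral>w. l (X w) \<mu> (Q w) \<partial>Om)"
        unfolding T_def innerE_def liftF_def liftL_def \<mu>_def by simp
      also have "\<dots> = (\<integral>w. f (X w) \<mu> (Q w) \<bullet> P w + l (X w) \<mu> (Q w) \<partial>Om)"
        by (rule Bochner_Integration.integral_add[OF i1 i2, symmetric])
      also have "\<dots> = (\<integral>w. G (X w, P w) (Q w) \<partial>Om)" unfolding G_def by simp
      finally show ?thesis using Bochner_Integration.integrable_add[OF i1 i2] unfolding G_def by simp
    qed
    have low: "HamLift f l Lam X P \<le> T Q" if Q: "Q \<in> L2on Lam" for Q
    proof -
      have "(\<integral>w. H w \<partial>Om) \<le> (\<integral>w. G (X w, P w) (Q w) \<partial>Om)"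
      proof (rule integral_mono[OF Hint])
        show "integrable Om (\<lambda>w. G (X w, P w) (Q w))" using TQ[OF Q] by simp
        fix w assume "w \<in> space Om"
        then have "Q w \<in> Lam" using Q unfolding L2on_def by auto
        then show "H w \<le> G (X w, P w) (Q w)" unfolding H_def by (rule hle)
      qed
      then show ?thesis using HL TQ[OF Q] by simp
    qed
    have cQ: "(\<lambda>w. q0) \<in> L2on Lam" unfolding L2on_def using q0 by auto
    have up: "\<exists>Q\<in>L2on Lam. T Q \<le> HamLift f l Lam X P + e" if e: "e > 0" for e
    proof -
      define N where "N w = (LEAST n. G (X w, P w) (s n) < H w + e)" for w
      define Q where "Q w = s (N w)" for w
      have Nprop: "G (X w, P w) (Q w) < H w + e" for w
      proof -
        obtain q where "q \<in> S" "G (X w, P w) q < h (X w, P w) + e" using S(4) e by blast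
        then obtain n where "G (X w, P w) (s n) < H w + e" using sr unfolding H_def by blast
        then show ?thesis unfolding Q_def N_def by (rule LeastI)
      qed
      have GSm: "(\<lambda>w. G (X w, P w) (s n)) \<in> borel_measurable Om" for n
        using measurable_comp[OF XPm Gzm[OF sS]] by (simp add: comp_def)
      have Nm: "N \<in> measurable Om (count_space UNIV)"
        unfolding N_def
      proof (rule measurable_Least)
        fix n
        have "{w \<in> space Om. G (X w, P w) (s n) < H w + e} \<in> sets Om"
          by (rule borel_measurable_less) (use GSm Hm in auto)
        then show "(\<lambda>w. G (X w, P w) (s n) < H w + e) \<in> measurable Om (count_space UNIV)"
          by (simp add: pred_def)
      qed
      have Qm: "Q \<in> borel_measurable Om"
        unfolding Q_def using measurable_comp[OF Nm, of s borel] by (simp add: comp_def)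
      have Qv: "Q w \<in> Lam" for w unfolding Q_def by (rule sS)
      have Qb: "(norm (Q w))\<^sup>2 \<le> 2 / C2 * (3 * K0 * (1 + (norm (X w))\<^sup>2 + (norm (P w))\<^sup>2 + (norm q0)\<^sup>2) + e)" for w
      proof -
        have a1: "C2/2 * (norm (Q w))\<^sup>2 - K0 * (1 + (norm (X w))\<^sup>2 + (norm (P w))\<^sup>2) \<le> G (X w, P w) (Q w)"
          using Blow[OF Qv[of w], of "(X w, P w)"] by simp
        have a2: "H w \<le> 2 * K0 * (1 + (norm (X w))\<^sup>2 + (norm (P w))\<^sup>2 + (norm q0)\<^sup>2)"
          using habs[of "(X w, P w)"] unfolding H_def by simp
        have a3: "0 \<le> K0 * (norm q0)\<^sup>2" using K0ge by auto
        have a4: "3 * K0 * (1 + (norm (X w))\<^sup>2 + (norm (P w))\<^sup>2 + (norm q0)\<^sup>2) = 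
           K0 * (1 + (norm (X w))\<^sup>2 + (norm (P w))\<^sup>2) + 2 * K0 * (1 + (norm (X w))\<^sup>2 + (norm (P w))\<^sup>2 + (norm q0)\<^sup>2)
           + K0 * (norm q0)\<^sup>2" by (simp add: algebra_simps)
        have "C2/2 * (norm (Q w))\<^sup>2 \<le> 3 * K0 * (1 + (norm (X w))\<^sup>2 + (norm (P w))\<^sup>2 + (norm q0)\<^sup>2) + e"
          using a1 a2 a3 a4 Nprop[of w] by linarith
        then show ?thesis using constants by (simp add: field_simps)
      qed
      have QL2: "Q \<in> L2on Lam"
        unfolding L2on_def
      proof (intro CollectI conjI ballI)
        show "Q \<in> borel_measurable Om" by (rule Qm)
        show "Q w \<in> Lam" for w by (rule Qv)
        show "integrable Om (\<lambda>w. (norm (Q w))\<^sup>2)"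
        proof (rule Bochner_Integration.integrable_bound)
          show "integrable Om (\<lambda>w. 2 / C2 * (3 * K0 * (1 + (norm (X w))\<^sup>2 + (norm (P w))\<^sup>2 + (norm q0)\<^sup>2) + e))"
            using Xm(2) Pm(2) by (intro integrable_mult_right integrable_add) auto
          show "(\<lambda>w. (norm (Q w))\<^sup>2) \<in> borel_measurable Om" using Qm by measurable
          show "AE w in Om. norm ((norm (Q w))\<^sup>2) \<le> norm (2 / C2 * (3 * K0 * (1 + (norm (X w))\<^sup>2 + (norm (P w))\<^sup>2 + (norm q0)\<^sup>2) + e))"
            using Qb by (intro AE_I2) (smt (verit) real_norm_def zero_le_power2)
        qed
      qed
      have "T Q = (\<integral>w. G (X w, P w) (Q w) \<partial>Om)" using TQ[OF QL2] by simp
      also have "\<dots> \<le> (\<integral>w. H w + e \<partial>Om)"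
        by (rule integral_mono) (use TQ[OF QL2] Hint in auto, rule less_imp_le[OF Nprop])
      also have "\<dots> = HamLift f l Lam X P + e" using HL Hint by (simp add: Om.prob_space)
      finally show ?thesis using QL2 by blast
    qed
    have bddT: "bdd_below (T ` L2on Lam)" by (rule bdd_belowI2[where m="HamLift f l Lam X P"]) (rule low)
    have ne: "L2on Lam \<noteq> {}" using cQ by blast
    have "HamLift f l Lam X P = (INF Q\<in>L2on Lam. T Q)"
    proof (rule antisym)
      show "HamLift f l Lam X P \<le> (INF Q\<in>L2on Lam. T Q)" by (rule cINF_greatest[OF ne low])
      show "(INF Q\<in>L2on Lam. T Q) \<le> HamLift f l Lam X P"
      proof (rule field_le_epsilon)
        fix e :: real assume "e > 0"
        then obtain Q where "Q \<in> L2on Lam" "T Q \<le> HamLift f l Lam X P + e" using up by blast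
        then show "(INF Q\<in>L2on Lam. T Q) \<le> HamLift f l Lam X P + e"
          using cINF_lower[OF bddT, of Q] by linarith
      qed
    qed
    then show ?thesis unfolding T_def .
  qed
qed

end
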